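(* Let $\mathbf{z}_1,\dots,\mathbf{z}_m\in\mathbb{R}_{>0}^n$ and $w_1,\dots,w_m\in\mathbb{R}_{>0}$ be such that $w_i=\ell(\mathbf{z}_i)$, $i=1,\dots,m$, for some function $\ell:\mathbb{R}_{>0}^n\to\mathbb{R}_{>0}$. Then for every $\tilde\varepsilon>0$ there exist a rational $T>0$ and two functions $\psi_T,\psi'_T\in\mathrm{GPOS}_T$ with rational parameters such that $$\left|\frac{w_i-\psi_T(\mathbf{z}_i)/\psi'_T(\mathbf{z}_i)}{\min\big(w_i,\psi_T(\mathbf{z}_i)/\psi'_T(\mathbf{z}_i)\big)}\right|\leqslant\tilde\varepsilon,\quad i=1,\dots,m.$$
   Context: A posynomial is a function $\psi:\mathbb{R}_{>0}^n\to\mathbb{R}_{>0}$, $\psi(\mathbf{x})=\sum_{k=1}^K c_k\mathbf{x}^{\boldsymbol{\alpha}^{(k)}}$, with $K$ a positive integer, $c_k>0$, $\boldsymbol{\alpha}^{(k)}\in\mathbb{R}^n$, and $\mathbf{x}^{\boldsymbol{\alpha}}=x_1^{\alpha_1}\cdots x_n^{\alpha_n}$. For $T>0$, $\mathrm{GPOS}_T$ is the class of functions $\psi_T(\mathbf{x})=(\psi(\mathbf{x}^{1/T}))^T$ with $\psi$ a posynomial (powers taken entrywise). $\psi_T\in\mathrm{GPOS}_T$ has rational parameters if it can be written so with $T$ rational, all entries of the $\boldsymbol{\alpha}^{(k)}$ rational, and all $\log c_k$ rational. *)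

theory Defs
  imports "HOL-Analysis.Analysis"
begin

definition pos_vec :: "real^'n \<Rightarrow> bool" where
  "pos_vec x \<longleftrightarrow> (\<forall>j. x $ j > 0)"

text \<open>A posynomial is represented by a nonempty list of terms (c_k, alpha^(k)) with c_k > 0;
  its value at x is the sum of c_k * x^alpha^(k).\<close>
definition monom_eval :: "real \<Rightarrow> real^'n \<Rightarrow> real^'n \<Rightarrow> real" where
  "monom_eval c \<alpha> x = c * (\<Prod>j\<in>UNIV. (x $ j) powr (\<alpha> $ j))"

definition posy_eval :: "(real \<times> (real^'n)) list \<Rightarrow> real^'n \<Rightarrow> real" where
  "posy_eval ps x = (\<Sum>(c, \<alpha>)\<leftarrow>ps. monom_eval c \<alpha> x)"

definition is_posy_rep :: "(real \<times> (real^'n)) list \<Rightarrow> bool" where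
  "is_posy_rep ps \<longleftrightarrow> ps \<noteq> [] \<and> (\<forall>(c, \<alpha>)\<in>set ps. c > 0)"

definition gpos_eval :: "real \<Rightarrow> (real \<times> (real^'n)) list \<Rightarrow> real^'n \<Rightarrow> real" where
  "gpos_eval T ps x = (posy_eval ps (\<chi> j. (x $ j) powr (1 / T))) powr T"

definition rational_gpos_rep :: "real \<Rightarrow> (real \<times> (real^'n)) list \<Rightarrow> bool" where
  "rational_gpos_rep T ps \<longleftrightarrow> T > 0 \<and> T \<in> \<rat> \<and> is_posy_rep ps \<and>
     (\<forall>(c, \<alpha>)\<in>set ps. ln c \<in> \<rat> \<and> (\<forall>j. \<alpha> $ j \<in> \<rat>))"

end

theory Submission imports Defs begin

lemma rat_vec_approx:
  fixes x :: "real^'n" assumes "e > 0"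
  shows "\<exists>a. (\<forall>j. a $ j \<in> \<rat>) \<and> norm (a - x) < e"
proof -
  have "\<forall>j. \<exists>q \<in> \<rat>. \<bar>q - x $ j\<bar> < e / CARD('n)"
  proof
    fix j
    have "e / CARD('n) > 0" using assms by simp
    then obtain q where "q \<in> \<rat>" "\<bar>q - x $ j\<bar> < e / CARD('n)" by (rule rational_approximation)
    then show "\<exists>q \<in> \<rat>. \<bar>q - x $ j\<bar> < e / CARD('n)" by blast
  qed
  then obtain a where a: "\<And>j. a$j \<in> \<rat>" "\<And>j. \<bar>a$j - x$j\<bar> < e / CARD('n)"
    by (auto simp: lambda_skolem Bex_def)
  have "norm (a - x) \<le> (\<Sum>j\<in>UNIV. \<bar>(a - x)$j\<bar>)" by (rule norm_le_l1_cart)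
  also have "\<dots> < (\<Sum>j\<in>(UNIV::'n set). e / CARD('n))"
    by (rule sum_strict_mono) (use a in auto)
  also have "\<dots> = e" by simp
  finally show ?thesis using a by blast
qed

lemma monom_log:
  fixes x :: "real^'n" assumes "pos_vec x"
  shows "monom_eval c \<alpha> x = c * exp (\<alpha> \<bullet> (\<chi> j. ln (x $ j)))"
proof -
  have "(\<Prod>j\<in>UNIV. (x $ j) powr (\<alpha> $ j)) = (\<Prod>j\<in>UNIV. exp (\<alpha> $ j * ln (x $ j)))"
  proof (intro prod.cong refl)
    fix j have "x $ j > 0" using assms by (simp add: pos_vec_def)
    then show "(x $ j) powr (\<alpha> $ j) = exp (\<alpha> $ j * ln (x $ j))" by (simp add: powr_def mult.commute)
  qed
  then show ?thesis by (simp add: monom_eval_def inner_vec_def exp_sum)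
qed

lemma gpos_one:
  fixes x :: "real^'n" assumes "pos_vec x" "is_posy_rep ps"
  shows "gpos_eval 1 ps x = posy_eval ps x"
proof -
  have x: "(\<chi> j. (x $ j) powr (1 / 1)) = x"
    using assms(1) by (simp add: pos_vec_def vec_eq_iff powr_one less_imp_le)
  have "posy_eval ps x \<ge> 0"
    unfolding posy_eval_def
    using assms(2) by (intro sum_list_nonneg) (fastforce simp: is_posy_rep_def monom_eval_def intro!: prod_nonneg mult_nonneg_nonneg)
  then show ?thesis unfolding gpos_eval_def x by (rule powr_one)
qed

lemma wavg:
  fixes E c :: "nat \<Rightarrow> real"
  assumes "finite I" "p \<in> I" "\<And>q. q \<in> I \<Longrightarrow> E q > 0"
  shows "\<bar>(\<Sum>q\<in>I. c q * E q) / (\<Sum>q\<in>I. E q) - c p\<bar> \<le> (\<Sum>q\<in>I. E q * \<bar>c q - c p\<bar>) / E p"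
proof -
  have S: "(\<Sum>q\<in>I. E q) \<ge> E p" using assms by (intro member_le_sum) (auto intro: less_imp_le)
  have Sp: "(\<Sum>q\<in>I. E q) > 0" using S assms by fastforce
  have "(\<Sum>q\<in>I. c q * E q) / (\<Sum>q\<in>I. E q) - c p = (\<Sum>q\<in>I. (c q - c p) * E q) / (\<Sum>q\<in>I. E q)"
    using Sp by (simp add: field_simps sum_subtractf sum_distrib_left)
  also have "\<bar>\<dots>\<bar> = \<bar>\<Sum>q\<in>I. (c q - c p) * E q\<bar> / (\<Sum>q\<in>I. E q)" using Sp by simp
  also have "\<dots> \<le> (\<Sum>q\<in>I. E q * \<bar>c q - c p\<bar>) / (\<Sum>q\<in>I. E q)"
    apply (rule divide_right_mono)
  proof -
    have "(\<Sum>i\<in>I. \<bar>(c i - c p) * E i\<bar>) = (\<Sum>q\<in>I. E q * \<bar>c q - c p\<bar>)"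
      by (rule sum.cong) (auto simp: abs_mult dest: assms(3))
    then show "\<bar>\<Sum>q\<in>I. (c q - c p) * E q\<bar> \<le> (\<Sum>q\<in>I. E q * \<bar>c q - c p\<bar>)"
      using sum_abs[of "\<lambda>q. (c q - c p) * E q" I] by simp
  qed (use Sp in simp)
  also have "\<dots> \<le> (\<Sum>q\<in>I. E q * \<bar>c q - c p\<bar>) / E p"
  proof (rule divide_left_mono)
    show "0 \<le> (\<Sum>q\<in>I. E q * \<bar>c q - c p\<bar>)"
      by (intro sum_nonneg mult_nonneg_nonneg) (auto dest: assms(3))
    show "0 < sum E I * E p" using Sp assms by simp
  qed (use S in simp)
  finally show ?thesis .
qed

lemma final_ineq:
  fixes e m0 w R :: real
  assumes "0 < e" "0 < m0" "m0 \<le> w" "\<bar>w - R\<bar> \<le> e * m0 / (1 + e)"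
  shows "\<bar>(w - R) / min w R\<bar> \<le> e"
proof -
  define \<eta> where "\<eta> = e * m0 / (1 + e)"
  have eta: "\<eta> * (1 + e) = e * m0" using assms(1) by (simp add: \<eta>_def)
  have "\<eta> < m0" using assms(1,2) eta by (smt (verit) mult_less_cancel_left_pos mult.commute)
  have mn: "min w R \<ge> m0 - \<eta>" using assms(3,4) by (auto simp: \<eta>_def)
  have pos: "m0 - \<eta> > 0" using \<open>\<eta> < m0\<close> by simp
  have "\<bar>(w - R) / min w R\<bar> = \<bar>w - R\<bar> / min w R" using mn pos by simp
  also have "\<dots> \<le> \<eta> / (m0 - \<eta>)"
    using assms(4) mn pos by (intro frac_le) (auto simp: \<eta>_def)
  also have "\<dots> \<le> e" using pos eta by (simp add: divide_le_eq algebra_simps)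
  finally show ?thesis .
qed

theorem proposition1:
  fixes z :: "nat \<Rightarrow> real^'n" and w :: "nat \<Rightarrow> real" and m :: nat and \<epsilon> :: real
  assumes z_pos: "\<forall>i\<in>{1..m}. pos_vec (z i)"
    and w_pos: "\<forall>i\<in>{1..m}. w i > 0"
    and ell: "\<exists>L :: real^'n \<Rightarrow> real. (\<forall>x. pos_vec x \<longrightarrow> L x > 0) \<and> (\<forall>i\<in>{1..m}. w i = L (z i))"
    and eps: "\<epsilon> > 0"
  shows "\<exists>T ps ps'. T \<in> \<rat> \<and> T > 0 \<and> rational_gpos_rep T ps \<and> rational_gpos_rep T ps' \<and>
    (\<forall>i\<in>{1..m}.
       \<bar>(w i - gpos_eval T ps (z i) / gpos_eval T ps' (z i))
          / min (w i) (gpos_eval T ps (z i) / gpos_eval T ps' (z i))\<bar> \<le> \<epsilon>)"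
proof (cases "m = 0")
  case True
  have "rational_gpos_rep 1 [(1::real, 0::real^'n)]"
    by (simp add: rational_gpos_rep_def is_posy_rep_def)
  then show ?thesis using True
    by (intro exI[of _ 1] exI[of _ "[(1::real, 0::real^'n)]"]) auto
next
  case False
  then have m1: "m \<ge> 1" by simp
  obtain L :: "real^'n \<Rightarrow> real" where wL: "\<forall>i\<in>{1..m}. w i = L (z i)" using ell by blast
  define u where "u q = (\<chi> j. ln (z q $ j))" for q
  define I where "I = {1..m}"
  have finI: "finite I" and cardI: "card I = m" and neI: "I \<noteq> {}" using m1 by (auto simp: I_def)
  define D where "D = {dist (u p) (u q) | p q. p \<in> I \<and> q \<in> I \<and> u p \<noteq> u q}"
  define r where "r = Min (insert 1 D)"
  have finD: "finite D"
  proof -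
    have "D \<subseteq> (\<lambda>(p, q). dist (u p) (u q)) ` (I \<times> I)" by (auto simp: D_def)
    then show ?thesis using finI finite_subset by blast
  qed
  have rpos: "r > 0" unfolding r_def using finD by (subst Min_gr_iff) (auto simp: D_def)
  have r_le: "r \<le> dist (u p) (u q)" if "p \<in> I" "q \<in> I" "u p \<noteq> u q" for p q
    unfolding r_def using finD that by (intro Min_le) (auto simp: D_def)
  have "\<forall>x::real^'n. \<exists>a. (\<forall>j. a $ j \<in> \<rat>) \<and> norm (a - x) < r / 4"
    using rpos by (intro allI rat_vec_approx) simp
  then obtain A where A: "\<And>x::real^'n. (\<forall>j. A x $ j \<in> \<rat>) \<and> norm (A x - x) < r / 4" by metis
  define a where "a q = A (u q)" for q
  define m0 where "m0 = Min (w ` I)"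
  have m0pos: "m0 > 0" unfolding m0_def using finI neI w_pos by (subst Min_gr_iff) (auto simp: I_def)
  have m0le: "m0 \<le> w p" if "p \<in> I" for p unfolding m0_def using finI that by simp
  define \<eta> where "\<eta> = \<epsilon> * m0 / (1 + \<epsilon>)"
  have etapos: "\<eta> > 0" using eps m0pos by (simp add: \<eta>_def)
  have "\<forall>y. \<exists>g. g \<in> \<rat> \<and> (0 < y \<longrightarrow> y < exp g \<and> exp g < y + \<eta> / 2)"
  proof
    fix y :: real
    show "\<exists>g. g \<in> \<rat> \<and> (0 < y \<longrightarrow> y < exp g \<and> exp g < y + \<eta> / 2)"
    proof (cases "0 < y")
      case True
      have "ln y < ln (y + \<eta> / 2)" using True etapos by simp
      then obtain g where "g \<in> \<rat>" "ln y < g" "g < ln (y + \<eta> / 2)" using Rats_dense_in_real by blast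
      moreover have "y < exp g" using True \<open>ln y < g\<close> by (metis exp_less_cancel_iff exp_ln)
      moreover have "exp g < y + \<eta> / 2" using True etapos \<open>g < ln (y + \<eta> / 2)\<close>
        by (metis add_pos_pos exp_less_cancel_iff exp_ln half_gt_zero)
      ultimately show ?thesis by blast
    qed auto
  qed
  then obtain G where G: "\<And>y. G y \<in> \<rat> \<and> (0 < y \<longrightarrow> y < exp (G y) \<and> exp (G y) < y + \<eta> / 2)" by metis
  define c where "c q = exp (G (w q))" for q
  have c_close: "\<bar>c q - w q\<bar> < \<eta> / 2" if "q \<in> I" for q
    using G[of "w q"] w_pos that by (auto simp: c_def I_def)
  define B where "B = (\<Sum>q\<in>I. c q)"
  have cB: "\<bar>c q - c p\<bar> \<le> B" if "q \<in> I" "p \<in> I" for p q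
  proof -
    have "c q \<le> B" "c p \<le> B" unfolding B_def using that finI
      by (auto intro!: member_le_sum simp: c_def less_imp_le)
    moreover have "c q > 0" "c p > 0" by (auto simp: c_def)
    ultimately show ?thesis by linarith
  qed
  have Bpos: "B > 0" unfolding B_def using finI neI by (intro sum_pos) (auto simp: c_def)
  define \<delta> where "\<delta> = r^2 / 2"
  have dpos: "\<delta> > 0" using rpos by (simp add: \<delta>_def)
  obtain N :: nat where N: "real N > 2 * m * B / (\<eta> * \<delta>)" using reals_Archimedean2 by blast
  have smallN: "real m * B * exp (- (real N * \<delta>)) < \<eta> / 2"
  proof -
    have e1: "exp (real N * \<delta>) > real N * \<delta>"
      using exp_ge_add_one_self[of "real N * \<delta>"] by linarith
    have "real N * \<delta> * \<eta> > 2 * m * B"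
      using N dpos etapos by (simp add: field_simps)
    moreover have "exp (real N * \<delta>) * \<eta> > real N * \<delta> * \<eta>"
      using e1 etapos by (rule mult_strict_right_mono)
    ultimately have "exp (real N * \<delta>) * \<eta> > 2 * m * B" by linarith
    then show ?thesis by (simp add: exp_minus field_simps)
  qed
  define ps where "ps = map (\<lambda>q. (exp (G (w q) - real N * (a q \<bullet> a q)), (2 * real N) *\<^sub>R a q)) [1..<Suc m]"
  define ps' where "ps' = map (\<lambda>q. (exp (- (real N * (a q \<bullet> a q))), (2 * real N) *\<^sub>R a q)) [1..<Suc m]"
  have a_rat: "a q $ j \<in> \<rat>" for q j using A by (simp add: a_def)
  have aa: "a q \<bullet> a q \<in> \<rat>" for q
    unfolding inner_vec_def using a_rat by (auto intro!: Rats_sum Rats_mult)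
  have rat1: "rational_gpos_rep 1 ps" using m1 A G aa
    by (auto simp: rational_gpos_rep_def is_posy_rep_def ps_def a_def)
  have rat2: "rational_gpos_rep 1 ps'" using m1 A aa
    by (auto simp: rational_gpos_rep_def is_posy_rep_def ps'_def a_def)
  have rep1: "is_posy_rep ps" and rep2: "is_posy_rep ps'"
    using rat1 rat2 by (auto simp: rational_gpos_rep_def)
  show ?thesis
  proof (intro exI conjI ballI)
    show "(1::real) \<in> \<rat>" "(1::real) > 0" by auto
    show "rational_gpos_rep 1 ps" "rational_gpos_rep 1 ps'" by (fact rat1, fact rat2)
    fix p assume pI0: "p \<in> {1..m}"
    then have pI: "p \<in> I" by (simp add: I_def)
    have zp: "pos_vec (z p)" using z_pos pI0 by blast
    define E where "E q = exp (real N * (2 * (a q \<bullet> u p) - a q \<bullet> a q))" for q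
    have Epos: "E q > 0" for q by (simp add: E_def)
    have listsum: "sum_list (map f [Suc 0..<Suc m]) = (\<Sum>q\<in>I. f q)" for f :: "nat \<Rightarrow> real"
    proof -
      have "sum_list (map f [Suc 0..<Suc m]) = sum f (set [Suc 0..<Suc m])"
        by (rule sum_set_upt_conv_sum_list_nat[symmetric])
      also have "set [Suc 0..<Suc m] = I" by (auto simp: I_def)
      finally show ?thesis .
    qed
    have P1: "posy_eval ps (z p) = (\<Sum>q\<in>I. c q * E q)"
    proof -
      have "posy_eval ps (z p) = (\<Sum>q\<in>I. monom_eval (exp (G (w q) - real N * (a q \<bullet> a q))) ((2 * real N) *\<^sub>R a q) (z p))"
        by (simp del: upt_Suc add: posy_eval_def ps_def o_def listsum)
      also have "\<dots> = (\<Sum>q\<in>I. c q * E q)"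
      proof (rule sum.cong[OF refl])
        fix q
        have "monom_eval (exp (G (w q) - real N * (a q \<bullet> a q))) ((2 * real N) *\<^sub>R a q) (z p)
              = exp (G (w q) - real N * (a q \<bullet> a q)) * exp ((2 * real N) * (a q \<bullet> u p))"
          by (simp add: monom_log[OF zp] u_def)
        also have "\<dots> = c q * E q" by (simp add: c_def E_def mult_exp_exp algebra_simps)
        finally show "monom_eval (exp (G (w q) - real N * (a q \<bullet> a q))) ((2 * real N) *\<^sub>R a q) (z p) = c q * E q" .
      qed
      finally show ?thesis .
    qed
    have P2: "posy_eval ps' (z p) = (\<Sum>q\<in>I. E q)"
    proof -
      have "posy_eval ps' (z p) = (\<Sum>q\<in>I. monom_eval (exp (- (real N * (a q \<bullet> a q)))) ((2 * real N) *\<^sub>R a q) (z p))"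
        by (simp del: upt_Suc add: posy_eval_def ps'_def o_def listsum)
      also have "\<dots> = (\<Sum>q\<in>I. E q)"
      proof (rule sum.cong[OF refl])
        fix q
        have "monom_eval (exp (- (real N * (a q \<bullet> a q)))) ((2 * real N) *\<^sub>R a q) (z p)
              = exp (- (real N * (a q \<bullet> a q))) * exp ((2 * real N) * (a q \<bullet> u p))"
          by (simp add: monom_log[OF zp] u_def)
        also have "\<dots> = E q" by (simp add: E_def mult_exp_exp algebra_simps)
        finally show "monom_eval (exp (- (real N * (a q \<bullet> a q)))) ((2 * real N) *\<^sub>R a q) (z p) = E q" .
      qed
      finally show ?thesis .
    qed
    define R where "R = gpos_eval 1 ps (z p) / gpos_eval 1 ps' (z p)"
    have R: "R = (\<Sum>q\<in>I. c q * E q) / (\<Sum>q\<in>I. E q)"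
      unfolding R_def gpos_one[OF zp rep1] gpos_one[OF zp rep2] P1 P2 ..
    have "\<bar>R - c p\<bar> \<le> (\<Sum>q\<in>I. E q * \<bar>c q - c p\<bar>) / E p"
      unfolding R using finI pI Epos by (intro wavg) auto
    also have "\<dots> = (\<Sum>q\<in>I. \<bar>c q - c p\<bar> * (E q / E p))"
      by (simp add: sum_divide_distrib mult.commute)
    also have "\<dots> \<le> (\<Sum>q\<in>I. B * exp (- (real N * \<delta>)))"
    proof (rule sum_mono)
      fix q assume qI: "q \<in> I"
      show "\<bar>c q - c p\<bar> * (E q / E p) \<le> B * exp (- (real N * \<delta>))"
      proof (cases "u q = u p")
        case True
        have "z q = z p"
        proof (subst vec_eq_iff, intro allI)
          fix j
          have "z q $ j > 0" "z p $ j > 0" using z_pos qI pI unfolding I_def pos_vec_def by auto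
          moreover have "ln (z q $ j) = ln (z p $ j)" using True unfolding u_def vec_eq_iff by simp
          ultimately show "z q $ j = z p $ j" by simp
        qed
        then have "w q = w p" using wL qI pI by (simp add: I_def)
        then show ?thesis using Bpos by (simp add: c_def)
      next
        case False
        have up: "norm (u p - a p) < r / 4" using A[of "u p"] by (simp add: a_def norm_minus_commute)
        have uq: "norm (u q - a q) < r / 4" using A[of "u q"] by (simp add: a_def norm_minus_commute)
        have "r \<le> norm (u p - u q)" using r_le[OF pI qI] False by (simp add: dist_norm)
        also have "\<dots> \<le> norm (u p - a q) + norm (u q - a q)"
          using norm_triangle_ineq4[of "u p - a q" "u q - a q"] by simp
        finally have far: "3 * r / 4 \<le> norm (u p - a q)" using uq by simp
        have sq: "norm (u - v)^2 = u \<bullet> u - 2 * (v \<bullet> u) + v \<bullet> v" for u v :: "real^'n"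
          by (simp add: power2_norm_eq_inner inner_diff inner_commute)
        have "(3 * r / 4)^2 \<le> norm (u p - a q)^2" using far rpos by (intro power_mono) auto
        moreover have "norm (u p - a p)^2 \<le> (r / 4)^2" using up by (intro power_mono) auto
        ultimately have diff: "(2 * (a q \<bullet> u p) - a q \<bullet> a q) - (2 * (a p \<bullet> u p) - a p \<bullet> a p) \<le> - \<delta>"
          unfolding sq \<delta>_def by (simp add: power_divide algebra_simps)
        have "E q / E p = exp (real N * ((2 * (a q \<bullet> u p) - a q \<bullet> a q) - (2 * (a p \<bullet> u p) - a p \<bullet> a p)))"
          by (simp add: E_def exp_diff[symmetric] algebra_simps)
        also have "\<dots> \<le> exp (- (real N * \<delta>))"
          using mult_left_mono[OF diff, of "real N"] by simp
        finally have "E q / E p \<le> exp (- (real N * \<delta>))" .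
        then show ?thesis using cB[OF qI pI] Epos
          by (intro mult_mono) (auto intro: less_imp_le)
      qed
    qed
    also have "\<dots> = real m * B * exp (- (real N * \<delta>))" using cardI by simp
    finally have "\<bar>R - c p\<bar> < \<eta> / 2" using smallN by simp
    then have "\<bar>w p - R\<bar> \<le> \<eta>"
      using c_close[OF pI] by linarith
    then have "\<bar>w p - R\<bar> \<le> \<epsilon> * m0 / (1 + \<epsilon>)"
      by (simp only: \<eta>_def)
    then show "\<bar>(w p - gpos_eval 1 ps (z p) / gpos_eval 1 ps' (z p))
          / min (w p) (gpos_eval 1 ps (z p) / gpos_eval 1 ps' (z p))\<bar> \<le> \<epsilon>"
      using final_ineq[OF eps m0pos m0le[OF pI]] unfolding R_def by blast
  qed
qed

end
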